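(* For $i\in\{1,2\}$ let $G_i=(V_i,E_i)$ be finite connected graphs with $n_i=|V_i|\ge 2$, $V_1\cap V_2=\emptyset$, and let $u\in V_1$, $v\in V_2$. Let $G$ be the graph with vertex set $V_1\cup V_2$ and edge set $E_1\cup E_2\cup\{\{u,v\}\}$. Let $D_1,D_2,D_G$ be the distance matrices of $G_1,G_2,G$. Assume: (C2) $D_1$ and $D_2$ are invertible, and let $K_{G_i}=n_iD_i^{-1}\mathbf{1}_{n_i}$ be the Steinerberger curvature of $G_i$ and $k_i=\sum_{x\in V_i}K_{G_i}(x)$ its total curvature; (C1) $Z:=\big(2+\frac{k_1}{n_1}\big)\big(2+\frac{k_2}{n_2}\big)\neq 4$; (C3) $k_u:=K_{G_1}(u)\neq 0$ and $k_v:=K_{G_2}(v)\neq 0$. Then $D_G$ is invertible and the Steinerberger curvature $K_G=(n_1+n_2)D_G^{-1}\mathbf{1}_{n_1+n_2}$ of $G$ satisfies $$K_G(x)=\alpha K_{G_1}(x)\ \ (x\in V_1\setminus\{u\}),\qquad K_G(y)=\beta K_{G_2}(y)\ \ (y\in V_2\setminus\{v\}),$$ $$K_G(u)=\gamma k_u,\qquad K_G(v)=\delta k_v,$$ where $$\alpha=\frac{2(n_1+n_2)k_2}{n_1n_2(Z-4)},\quad \beta=\frac{2(n_1+n_2)k_1}{n_1n_2(Z-4)},\quad \gamma=\Big(1-\frac{k_1}{2k_u}\Big)\alpha,\quad \delta=\Big(1-\frac{k_2}{2k_v}\Big)\beta.$$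
   Context: All graphs are finite, simple, connected and undirected, with the combinatorial shortest-path distance $d$. For $G=(V,E)$ with $V=\{v_1,\dots,v_n\}$, let $D=(d(v_i,v_j))_{i,j=1}^n$ be its distance matrix and $\mathbf{1}_n\in\mathbb{R}^n$ the all-ones column vector. The Steinerberger curvature $K\in\mathbb{R}^n$ (written $K_i$ or $K(v_i)$) is defined as follows: if $DK=n\mathbf{1}_n$ has a unique solution, $K$ is that solution; if it has several solutions, $K$ is a solution for which $\min_i K_i$ is maximal; if it has no solution, $K=nD^\dagger\mathbf{1}_n$ with $D^\dagger$ the Moore–Penrose pseudoinverse. The total curvature of a vertex subset $W$ is $K(W)=\sum_{w\in W}K(w)$. *)

theory Defs
  imports "HOL-Analysis.Analysis"
begin

definition is_walk :: "('v \<Rightarrow> 'v \<Rightarrow> bool) \<Rightarrow> 'v list \<Rightarrow> bool" where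
  "is_walk E xs \<longleftrightarrow> xs \<noteq> [] \<and> (\<forall>i. Suc i < length xs \<longrightarrow> E (xs ! i) (xs ! Suc i))"

definition simple_graph :: "('v \<Rightarrow> 'v \<Rightarrow> bool) \<Rightarrow> bool" where
  "simple_graph E \<longleftrightarrow> (\<forall>x y. E x y \<longrightarrow> E y x) \<and> (\<forall>x. \<not> E x x)"

definition graph_connected :: "('v \<Rightarrow> 'v \<Rightarrow> bool) \<Rightarrow> bool" where
  "graph_connected E \<longleftrightarrow>
     (\<forall>x y. \<exists>xs. is_walk E xs \<and> hd xs = x \<and> last xs = y)"

definition graph_dist :: "('v \<Rightarrow> 'v \<Rightarrow> bool) \<Rightarrow> 'v \<Rightarrow> 'v \<Rightarrow> nat" where
  "graph_dist E x y =
     (LEAST n. \<exists>xs. is_walk E xs \<and> hd xs = x \<and> last xs = y \<and> length xs = Suc n)"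

definition dist_matrix :: "('v::finite \<Rightarrow> 'v \<Rightarrow> bool) \<Rightarrow> real^'v^'v" where
  "dist_matrix E = (\<chi> i j. real (graph_dist E i j))"

text \<open>Steinerberger curvature in the case of an invertible distance matrix:
  the unique solution of D K = n 1, i.e. n D^{-1} 1.\<close>
definition curv_inv :: "real^'v^'v \<Rightarrow> real^'v::finite" where
  "curv_inv D = real CARD('v) *\<^sub>R (matrix_inv D *v (1::real^'v))"

text \<open>Bridge graph: disjoint union of G1 (on 'a) and G2 (on 'b) plus the edge {u,v}.\<close>
definition bridge_edges ::
  "('a \<Rightarrow> 'a \<Rightarrow> bool) \<Rightarrow> ('b \<Rightarrow> 'b \<Rightarrow> bool) \<Rightarrow> 'a \<Rightarrow> 'b \<Rightarrow> ('a + 'b) \<Rightarrow> ('a + 'b) \<Rightarrow> bool" where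
  "bridge_edges E1 E2 u v x y =
     (case (x, y) of
        (Inl a, Inl b) \<Rightarrow> E1 a b
      | (Inr a, Inr b) \<Rightarrow> E2 a b
      | (Inl a, Inr b) \<Rightarrow> a = u \<and> b = v
      | (Inr a, Inl b) \<Rightarrow> b = u \<and> a = v)"

end

theory Submission
  imports Defs
begin


lemma walk_single: "is_walk E [x]"
  by (simp add: is_walk_def)

lemma walk_append:
  assumes "is_walk E xs" "is_walk E ys" "E (last xs) (hd ys)"
  shows "is_walk E (xs @ ys)"
  unfolding is_walk_def
proof (intro conjI allI impI)
  show "xs @ ys \<noteq> []" using assms(1) by (simp add: is_walk_def)
  fix i assume i: "Suc i < length (xs @ ys)"
  have xs: "xs \<noteq> []" "\<And>i. Suc i < length xs \<Longrightarrow> E (xs ! i) (xs ! Suc i)"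
    using assms(1) by (auto simp: is_walk_def)
  have ys: "ys \<noteq> []" "\<And>i. Suc i < length ys \<Longrightarrow> E (ys ! i) (ys ! Suc i)"
    using assms(2) by (auto simp: is_walk_def)
  consider "Suc i < length xs" | "Suc i = length xs" | "Suc i > length xs" by linarith
  then show "E ((xs @ ys) ! i) ((xs @ ys) ! Suc i)"
  proof cases
    case 1 then show ?thesis using xs by (simp add: nth_append)
  next
    case 2
    then have ii: "i = length xs - 1" by simp
    then have "(xs @ ys) ! i = last xs" using xs(1)
      by (simp add: nth_append last_conv_nth)
    moreover have "(xs @ ys) ! Suc i = hd ys" using 2 ys(1)
      by (simp add: nth_append hd_conv_nth)
    ultimately show ?thesis using assms(3) by simp
  next
    case 3
    then obtain j where j: "i = length xs + j" by (metis less_imp_Suc_add Suc_lessD add_Suc_right less_Suc_eq_le le_Suc_ex)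
    have "Suc j < length ys" using i j by simp
    then show ?thesis using ys j by (simp add: nth_append)
  qed
qed

lemma walk_map:
  assumes "is_walk E xs" "\<And>a b. E a b \<Longrightarrow> E' (f a) (f b)"
  shows "is_walk E' (map f xs)"
  using assms by (auto simp: is_walk_def)

lemma walk_pot:
  fixes \<phi> :: "'v \<Rightarrow> nat"
  assumes "is_walk E xs" "\<And>a b. E a b \<Longrightarrow> \<phi> b \<le> \<phi> a + 1"
  shows "\<phi> (last xs) \<le> \<phi> (hd xs) + (length xs - 1)"
proof -
  have ne: "xs \<noteq> []" using assms(1) by (simp add: is_walk_def)
  have "\<forall>i. i < length xs \<longrightarrow> \<phi> (xs!i) \<le> \<phi> (xs!0) + i"
  proof (intro allI)
    fix i show "i < length xs \<longrightarrow> \<phi> (xs!i) \<le> \<phi> (xs!0) + i"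
    proof (induction i)
      case 0 then show ?case by simp
    next
      case (Suc i)
      show ?case
      proof
        assume "Suc i < length xs"
        then have "E (xs!i) (xs!Suc i)" using assms(1) by (simp add: is_walk_def)
        then have "\<phi> (xs!Suc i) \<le> \<phi> (xs!i) + 1" by (rule assms(2))
        then show "\<phi> (xs!Suc i) \<le> \<phi> (xs!0) + Suc i" using Suc \<open>Suc i < length xs\<close> by simp
      qed
    qed
  qed
  then show ?thesis using ne by (simp add: last_conv_nth hd_conv_nth)
qed

lemma dist_eqI:
  fixes \<phi> :: "'v \<Rightarrow> nat"
  assumes "is_walk E xs" "hd xs = x" "last xs = y" "length xs = Suc d"
    "\<And>a b. E a b \<Longrightarrow> \<phi> b \<le> \<phi> a + 1" "\<phi> x = 0" "\<phi> y = d"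
  shows "graph_dist E x y = d"
  unfolding graph_dist_def
proof (rule Least_equality)
  show "\<exists>xs. is_walk E xs \<and> hd xs = x \<and> last xs = y \<and> length xs = Suc d" using assms by blast
next
  fix m assume "\<exists>xs. is_walk E xs \<and> hd xs = x \<and> last xs = y \<and> length xs = Suc m"
  then obtain ys where ys: "is_walk E ys" "hd ys = x" "last ys = y" "length ys = Suc m" by blast
  have "\<phi> (last ys) \<le> \<phi> (hd ys) + (length ys - 1)"
    by (rule walk_pot[OF ys(1)]) (rule assms(5))
  with ys assms(6,7) show "d \<le> m" by simp
qed

lemma dist_walk:
  assumes "graph_connected E"
  shows "\<exists>xs. is_walk E xs \<and> hd xs = x \<and> last xs = y \<and> length xs = Suc (graph_dist E x y)"
proof -
  obtain xs where xs: "is_walk E xs" "hd xs = x" "last xs = y"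
    using assms by (auto simp: graph_connected_def)
  then have ne: "xs \<noteq> []" by (simp add: is_walk_def)
  have "\<exists>n xs. is_walk E xs \<and> hd xs = x \<and> last xs = y \<and> length xs = Suc n"
    using xs ne by (intro exI[of _ "length xs - 1"] exI[of _ xs]) simp
  then show ?thesis unfolding graph_dist_def by (rule LeastI_ex)
qed

lemma dist_self: "graph_dist E x x = 0"
  unfolding graph_dist_def
  by (rule Least_equality) (auto intro!: exI[of _ "[x]"] simp: walk_single)

lemma dist_tri:
  assumes "graph_connected E" "E a b"
  shows "graph_dist E x b \<le> graph_dist E x a + 1"
proof -
  obtain xs where xs: "is_walk E xs" "hd xs = x" "last xs = a" "length xs = Suc (graph_dist E x a)"
    using dist_walk[OF assms(1)] by blast
  have "is_walk E (xs @ [b])" using walk_append[OF xs(1) walk_single] xs(3) assms(2) by simp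
  moreover have "hd (xs @ [b]) = x" using xs(1,2) by (simp add: is_walk_def)
  ultimately have "\<exists>ys. is_walk E ys \<and> hd ys = x \<and> last ys = b \<and> length ys = Suc (graph_dist E x a + 1)"
    using xs(4) by (intro exI[of _ "xs @ [b]"]) simp
  then show ?thesis unfolding graph_dist_def by (rule Least_le)
qed


lemma bridge_dist_Inl:
  fixes E1 :: "'a \<Rightarrow> 'a \<Rightarrow> bool" and E2 :: "'b \<Rightarrow> 'b \<Rightarrow> bool"
  assumes c1: "graph_connected E1" and c2: "graph_connected E2"
  shows "graph_dist (bridge_edges E1 E2 u v) (Inl x) (Inl a) = graph_dist E1 x a"
    and "graph_dist (bridge_edges E1 E2 u v) (Inl x) (Inr b) = graph_dist E1 x u + 1 + graph_dist E2 v b"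
proof -
  let ?B = "bridge_edges E1 E2 u v"
  define \<phi> where "\<phi> = case_sum (\<lambda>a. graph_dist E1 x a) (\<lambda>b. graph_dist E1 x u + 1 + graph_dist E2 v b)"
  have lip: "\<phi> z' \<le> \<phi> z + 1" if "?B z z'" for z z'
  proof (cases z; cases z')
    fix a b assume "z = Inl a" "z' = Inl b"
    then show ?thesis using that dist_tri[OF c1] by (simp add: \<phi>_def bridge_edges_def)
  next
    fix a b assume "z = Inr a" "z' = Inr b"
    then show ?thesis using that dist_tri[OF c2] by (simp add: \<phi>_def bridge_edges_def)
  next
    fix a b assume "z = Inl a" "z' = Inr b"
    then show ?thesis using that by (simp add: \<phi>_def bridge_edges_def dist_self)
  next
    fix a b assume "z = Inr a" "z' = Inl b"
    then show ?thesis using that by (simp add: \<phi>_def bridge_edges_def dist_self)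
  qed
  have m1: "\<And>a b. E1 a b \<Longrightarrow> ?B (Inl a) (Inl b)" by (simp add: bridge_edges_def)
  have m2: "\<And>a b. E2 a b \<Longrightarrow> ?B (Inr a) (Inr b)" by (simp add: bridge_edges_def)
  have wl: "\<And>xs. is_walk E1 xs \<Longrightarrow> is_walk ?B (map Inl xs)"
    by (rule walk_map) (auto simp: bridge_edges_def)
  have wr: "\<And>xs. is_walk E2 xs \<Longrightarrow> is_walk ?B (map Inr xs)"
    by (rule walk_map) (auto simp: bridge_edges_def)
  obtain xs where xs: "is_walk E1 xs" "hd xs = x" "last xs = a" "length xs = Suc (graph_dist E1 x a)"
    using dist_walk[OF c1] by blast
  show "graph_dist ?B (Inl x) (Inl a) = graph_dist E1 x a"
    apply (rule dist_eqI[where xs="map Inl xs" and \<phi>=\<phi>])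
    using xs wl[OF xs(1)] lip
    by (auto simp: \<phi>_def dist_self hd_map last_map is_walk_def)
  obtain ys where ys: "is_walk E1 ys" "hd ys = x" "last ys = u" "length ys = Suc (graph_dist E1 x u)"
    using dist_walk[OF c1] by blast
  obtain zs where zs: "is_walk E2 zs" "hd zs = v" "last zs = b" "length zs = Suc (graph_dist E2 v b)"
    using dist_walk[OF c2] by blast
  have ne: "ys \<noteq> []" "zs \<noteq> []" using ys zs by (auto simp: is_walk_def)
  have w: "is_walk ?B (map Inl ys @ map Inr zs)"
    apply (rule walk_append[OF wl[OF ys(1)] wr[OF zs(1)]])
    using ne ys zs by (simp add: last_map hd_map bridge_edges_def)
  show "graph_dist ?B (Inl x) (Inr b) = graph_dist E1 x u + 1 + graph_dist E2 v b"
    apply (rule dist_eqI[OF w _ _ _ lip])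
    using ne ys zs by (auto simp: \<phi>_def dist_self hd_map last_map)
qed

lemma bridge_dist_Inr:
  fixes E1 :: "'a \<Rightarrow> 'a \<Rightarrow> bool" and E2 :: "'b \<Rightarrow> 'b \<Rightarrow> bool"
  assumes c1: "graph_connected E1" and c2: "graph_connected E2"
  shows "graph_dist (bridge_edges E1 E2 u v) (Inr y) (Inr b) = graph_dist E2 y b"
    and "graph_dist (bridge_edges E1 E2 u v) (Inr y) (Inl a) = graph_dist E2 y v + 1 + graph_dist E1 u a"
proof -
  let ?B = "bridge_edges E1 E2 u v"
  define \<phi> where "\<phi> = case_sum (\<lambda>a. graph_dist E2 y v + 1 + graph_dist E1 u a) (\<lambda>b. graph_dist E2 y b)"
  have lip: "\<phi> z' \<le> \<phi> z + 1" if "?B z z'" for z z'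
  proof (cases z; cases z')
    fix a b assume "z = Inl a" "z' = Inl b"
    then show ?thesis using that dist_tri[OF c1] by (simp add: \<phi>_def bridge_edges_def)
  next
    fix a b assume "z = Inr a" "z' = Inr b"
    then show ?thesis using that dist_tri[OF c2] by (simp add: \<phi>_def bridge_edges_def)
  next
    fix a b assume "z = Inl a" "z' = Inr b"
    then show ?thesis using that by (simp add: \<phi>_def bridge_edges_def dist_self)
  next
    fix a b assume "z = Inr a" "z' = Inl b"
    then show ?thesis using that by (simp add: \<phi>_def bridge_edges_def dist_self)
  qed
  have m1: "\<And>a b. E1 a b \<Longrightarrow> ?B (Inl a) (Inl b)" by (simp add: bridge_edges_def)
  have m2: "\<And>a b. E2 a b \<Longrightarrow> ?B (Inr a) (Inr b)" by (simp add: bridge_edges_def)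
  have wl: "\<And>xs. is_walk E1 xs \<Longrightarrow> is_walk ?B (map Inl xs)"
    by (rule walk_map) (auto simp: bridge_edges_def)
  have wr: "\<And>xs. is_walk E2 xs \<Longrightarrow> is_walk ?B (map Inr xs)"
    by (rule walk_map) (auto simp: bridge_edges_def)
  obtain xs where xs: "is_walk E2 xs" "hd xs = y" "last xs = b" "length xs = Suc (graph_dist E2 y b)"
    using dist_walk[OF c2] by blast
  show "graph_dist ?B (Inr y) (Inr b) = graph_dist E2 y b"
    apply (rule dist_eqI[where xs="map Inr xs" and \<phi>=\<phi>])
    using xs wr[OF xs(1)] lip
    by (auto simp: \<phi>_def dist_self hd_map last_map is_walk_def)
  obtain ys where ys: "is_walk E2 ys" "hd ys = y" "last ys = v" "length ys = Suc (graph_dist E2 y v)"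
    using dist_walk[OF c2] by blast
  obtain zs where zs: "is_walk E1 zs" "hd zs = u" "last zs = a" "length zs = Suc (graph_dist E1 u a)"
    using dist_walk[OF c1] by blast
  have ne: "ys \<noteq> []" "zs \<noteq> []" using ys zs by (auto simp: is_walk_def)
  have w: "is_walk ?B (map Inr ys @ map Inl zs)"
    apply (rule walk_append[OF wr[OF ys(1)] wl[OF zs(1)]])
    using ne ys zs by (simp add: last_map hd_map bridge_edges_def)
  show "graph_dist ?B (Inr y) (Inl a) = graph_dist E2 y v + 1 + graph_dist E1 u a"
    apply (rule dist_eqI[OF w _ _ _ lip])
    using ne ys zs by (auto simp: \<phi>_def dist_self hd_map last_map)
qed


lemma side_kernel:
  fixes d :: "'a::finite \<Rightarrow> 'a \<Rightarrow> real" and K :: "real^'a" and f :: "'a \<Rightarrow> real"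
  assumes H: "\<And>x. (\<Sum>a\<in>UNIV. d x a * K$a) = n"
    and inj: "\<And>g::real^'a. (\<And>x. (\<Sum>a\<in>UNIV. d x a * g$a) = 0) \<Longrightarrow> g = 0"
    and duu: "d u u = 0" and n0: "n \<noteq> 0"
    and eq: "\<And>x. (\<Sum>a\<in>UNIV. d x a * f a) + (d x u + 1) * S + T = 0"
  shows "\<And>a. f a = - S * (if a = u then 1 else 0) - (S + T) / n * K$a"
    and "(\<Sum>a\<in>UNIV. f a) = - S - (S + T) / n * (\<Sum>a\<in>UNIV. K$a)"
    and "(\<Sum>a\<in>UNIV. d u a * f a) = - (S + T)"
proof -
  define g where "g = (\<chi> a. f a + S * (if a = u then 1 else 0) + (S + T) / n * K$a)"
  have "(\<Sum>a\<in>UNIV. d x a * g$a) = 0" for x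
  proof -
    have "(\<Sum>a\<in>UNIV. d x a * g$a) = (\<Sum>a\<in>UNIV. d x a * f a) + S * (\<Sum>a\<in>UNIV. d x a * (if a = u then 1 else 0)) + (S + T) / n * (\<Sum>a\<in>UNIV. d x a * K$a)"
      by (simp add: g_def sum.distrib sum_distrib_left algebra_simps)
    also have "(\<Sum>a\<in>UNIV. d x a * (if a = u then 1 else 0)) = d x u"
      by (simp add: if_distrib cong: if_cong)
    also have "(S + T) / n * (\<Sum>a\<in>UNIV. d x a * K$a) = S + T" using H[of x] n0 by simp
    finally show ?thesis using eq[of x] by (simp add: algebra_simps)
  qed
  then have "g = 0" by (rule inj)
  show fa: "f a = - S * (if a = u then 1 else 0) - (S + T) / n * K$a" for a
  proof -
    have "g $ a = 0" using \<open>g = 0\<close> by simp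
    then have "f a + S * (if a = u then 1 else 0) + (S + T) / n * K$a = 0" by (simp add: g_def)
    then show ?thesis by linarith
  qed
  have "(\<Sum>a\<in>UNIV. f a) = (\<Sum>a\<in>UNIV. - S * (if a = u then 1 else 0) - (S + T) / n * K$a)"
    using fa by simp
  also have "\<dots> = (\<Sum>a\<in>UNIV. - S * (if a = u then 1 else 0)) - (\<Sum>a\<in>UNIV. (S + T) / n * K$a)"
    by (rule sum_subtractf)
  also have "\<dots> = - S - (S + T) / n * (\<Sum>a\<in>UNIV. K$a)"
    by (simp only: sum_distrib_left[symmetric]) simp
  finally show "(\<Sum>a\<in>UNIV. f a) = - S - (S + T) / n * (\<Sum>a\<in>UNIV. K$a)" .
  have "(\<Sum>a\<in>UNIV. d u a * f a) = (\<Sum>a\<in>UNIV. - S * (d u a * (if a = u then 1 else 0)) - (S + T) / n * (d u a * K$a))"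
    by (intro sum.cong refl) (subst fa, simp add: algebra_simps)
  also have "\<dots> = (\<Sum>a\<in>UNIV. - S * (d u a * (if a = u then 1 else 0))) - (\<Sum>a\<in>UNIV. (S + T) / n * (d u a * K$a))"
    by (rule sum_subtractf)
  also have "\<dots> = - S * d u u - (S + T) / n * n"
    by (simp only: sum_distrib_left[symmetric] H) (simp add: if_distrib cong: if_cong)
  also have "\<dots> = - (S + T)" using duu n0 by simp
  finally show "(\<Sum>a\<in>UNIV. d u a * f a) = - (S + T)" .
qed

lemma side_exist:
  fixes d :: "'a::finite \<Rightarrow> 'a \<Rightarrow> real" and K :: "real^'a"
  assumes H: "\<And>x. (\<Sum>a\<in>UNIV. d x a * K$a) = n" and duu: "d u u = 0"
  shows "(\<Sum>a\<in>UNIV. d x a * (\<alpha> * K$a + (if a = u then c else 0))) = \<alpha> * n + c * d x u"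
    and "(\<Sum>a\<in>UNIV. \<alpha> * K$a + (if a = u then c else 0)) = \<alpha> * (\<Sum>a\<in>UNIV. K$a) + c"
proof -
  have "(\<Sum>a\<in>UNIV. d x a * (\<alpha> * K$a + (if a = u then c else 0))) = (\<Sum>a\<in>UNIV. \<alpha> * (d x a * K$a) + (if a = u then c * d x a else 0))"
    by (rule sum.cong) (auto simp: algebra_simps)
  also have "\<dots> = \<alpha> * (\<Sum>a\<in>UNIV. d x a * K$a) + (\<Sum>a\<in>UNIV. (if a = u then c * d x a else 0))"
    by (simp add: sum.distrib sum_distrib_left)
  finally have "(\<Sum>a\<in>UNIV. d x a * (\<alpha> * K$a + (if a = u then c else 0))) = \<alpha> * (\<Sum>a\<in>UNIV. d x a * K$a) + (\<Sum>a\<in>UNIV. (if a = u then c * d x a else 0))" .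
  then show "(\<Sum>a\<in>UNIV. d x a * (\<alpha> * K$a + (if a = u then c else 0))) = \<alpha> * n + c * d x u"
    using H by simp
  show "(\<Sum>a\<in>UNIV. \<alpha> * K$a + (if a = u then c else 0)) = \<alpha> * (\<Sum>a\<in>UNIV. K$a) + c"
    by (simp add: sum.distrib sum_distrib_left)
qed

lemma alg:
  fixes n1 n2 k1 k2 Z \<alpha> \<beta> :: real
  assumes "n1 > 0" "n2 > 0" "Z = (2 + k1 / n1) * (2 + k2 / n2)" "Z \<noteq> 4"
    "\<alpha> = 2 * (n1 + n2) * k2 / (n1 * n2 * (Z - 4))"
    "\<beta> = 2 * (n1 + n2) * k1 / (n1 * n2 * (Z - 4))"
  shows "\<alpha> * k1 = \<beta> * k2" "\<alpha> * n1 + \<beta> * k2 / 2 + \<beta> * n2 = n1 + n2"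
proof -
  have Z4: "n1 * n2 * (Z - 4) = 2 * k2 * n1 + 2 * k1 * n2 + k1 * k2"
    using assms(1-3) by (simp add: field_simps)
  have "n1 * n2 * (Z - 4) \<noteq> 0" using assms(1,2,4) by simp
  then have nz: "2 * k2 * n1 + 2 * k1 * n2 + k1 * k2 \<noteq> 0" using Z4 by simp
  show "\<alpha> * k1 = \<beta> * k2" using assms(5,6) by simp
  have a: "\<alpha> = 2 * (n1 + n2) * k2 / (2 * k2 * n1 + 2 * k1 * n2 + k1 * k2)" using assms(5) Z4 by simp
  have b: "\<beta> = 2 * (n1 + n2) * k1 / (2 * k2 * n1 + 2 * k1 * n2 + k1 * k2)" using assms(6) Z4 by simp
  define N where "N = 2 * k2 * n1 + 2 * k1 * n2 + k1 * k2"
  have aN: "\<alpha> * N = 2 * (n1 + n2) * k2" using nz unfolding a N_def by simp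
  have bN: "\<beta> * N = 2 * (n1 + n2) * k1" using nz unfolding b N_def by simp
  have "(\<alpha> * n1 + \<beta> * k2 / 2 + \<beta> * n2) * N = n1 * (\<alpha> * N) + k2 / 2 * (\<beta> * N) + n2 * (\<beta> * N)"
    by (simp add: algebra_simps)
  also have "\<dots> = (n1 + n2) * N" unfolding aN bN by (simp add: N_def algebra_simps)
  finally show "\<alpha> * n1 + \<beta> * k2 / 2 + \<beta> * n2 = n1 + n2" using nz N_def by simp
qed


lemma curv_eq:
  fixes D :: "real^'n::finite^'n"
  assumes "invertible D" "D *v w = real CARD('n) *\<^sub>R 1"
  shows "curv_inv D = w"
proof -
  have inv: "matrix_inv D ** D = mat 1" "D ** matrix_inv D = mat 1"
    using assms(1) unfolding invertible_def matrix_inv_def by (metis (mono_tags, lifting) someI_ex)+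
  have "curv_inv D = matrix_inv D *v (real CARD('n) *\<^sub>R 1)"
    by (simp add: curv_inv_def matrix_vector_mult_scaleR)
  also have "\<dots> = matrix_inv D *v (D *v w)" using assms(2) by simp
  also have "\<dots> = w" by (simp add: matrix_vector_mul_assoc inv)
  finally show ?thesis .
qed

lemma side_facts:
  fixes E :: "'a::finite \<Rightarrow> 'a \<Rightarrow> bool"
  assumes "invertible (dist_matrix E)"
  shows "\<And>x. (\<Sum>a\<in>UNIV. real (graph_dist E x a) * curv_inv (dist_matrix E) $ a) = real CARD('a)"
    and "\<And>g::real^'a. (\<And>x. (\<Sum>a\<in>UNIV. real (graph_dist E x a) * g$a) = 0) \<Longrightarrow> g = 0"
proof -
  let ?D = "dist_matrix E"
  have inv: "matrix_inv ?D ** ?D = mat 1" "?D ** matrix_inv ?D = mat 1"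
    using assms(1) unfolding invertible_def matrix_inv_def by (metis (mono_tags, lifting) someI_ex)+
  have "?D *v curv_inv ?D = real CARD('a) *\<^sub>R 1"
    by (simp add: curv_inv_def matrix_vector_mult_scaleR matrix_vector_mul_assoc inv)
  then show "\<And>x. (\<Sum>a\<in>UNIV. real (graph_dist E x a) * curv_inv ?D $ a) = real CARD('a)"
    by (simp add: vec_eq_iff matrix_vector_mult_def dist_matrix_def)
  fix g :: "real^'a" assume g: "\<And>x. (\<Sum>a\<in>UNIV. real (graph_dist E x a) * g$a) = 0"
  have "?D *v g = 0" using g by (simp add: vec_eq_iff matrix_vector_mult_def dist_matrix_def)
  then have "?D *v g = ?D *v 0" by simp
  then show "g = 0" using inj_matrix_vector_mult[OF assms] by (simp add: inj_def)
qed

lemma sum_split_UNIV: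
  fixes h :: "'a::finite + 'b::finite \<Rightarrow> real"
  shows "(\<Sum>z\<in>UNIV. h z) = (\<Sum>a\<in>UNIV. h (Inl a)) + (\<Sum>b\<in>UNIV. h (Inr b))"
  using sum.Plus[of "UNIV::'a set" "UNIV::'b set" h] by (simp add: UNIV_Plus_UNIV comp_def)

theorem mainTheorem5:
  fixes E1 :: "'a::finite \<Rightarrow> 'a \<Rightarrow> bool" and E2 :: "'b::finite \<Rightarrow> 'b \<Rightarrow> bool"
    and u :: 'a and v :: 'b
    and n1 n2 k1 k2 Z ku kv :: real and K1 :: "real^'a" and K2 :: "real^'b"
  assumes n_def: "n1 = real CARD('a)" "n2 = real CARD('b)"
    and K_def: "K1 = curv_inv (dist_matrix E1)" "K2 = curv_inv (dist_matrix E2)"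
    and k_def: "k1 = (\<Sum>x\<in>UNIV. K1 $ x)" "k2 = (\<Sum>y\<in>UNIV. K2 $ y)"
    and Z_def: "Z = (2 + k1 / n1) * (2 + k2 / n2)"
    and kuv_def: "ku = K1 $ u" "kv = K2 $ v"
    and G1: "simple_graph E1" "graph_connected E1" "CARD('a) \<ge> 2"
    and G2: "simple_graph E2" "graph_connected E2" "CARD('b) \<ge> 2"
    and C2: "invertible (dist_matrix E1)" "invertible (dist_matrix E2)"
    and C1: "Z \<noteq> 4"
    and C3: "ku \<noteq> 0" "kv \<noteq> 0"
  shows "let D = dist_matrix (bridge_edges E1 E2 u v); K = curv_inv D;
             \<alpha> = 2 * (n1 + n2) * k2 / (n1 * n2 * (Z - 4));
             \<beta> = 2 * (n1 + n2) * k1 / (n1 * n2 * (Z - 4));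
             \<gamma> = (1 - k1 / (2 * ku)) * \<alpha>;
             \<delta> = (1 - k2 / (2 * kv)) * \<beta>
         in invertible D
            \<and> (\<forall>x. x \<noteq> u \<longrightarrow> K $ Inl x = \<alpha> * K1 $ x)
            \<and> (\<forall>y. y \<noteq> v \<longrightarrow> K $ Inr y = \<beta> * K2 $ y)
            \<and> K $ Inl u = \<gamma> * ku
            \<and> K $ Inr v = \<delta> * kv"
proof -
  define D where "D = dist_matrix (bridge_edges E1 E2 u v)"
  define \<alpha> where "\<alpha> = 2 * (n1 + n2) * k2 / (n1 * n2 * (Z - 4))"
  define \<beta> where "\<beta> = 2 * (n1 + n2) * k1 / (n1 * n2 * (Z - 4))"
  define d1 where "d1 = (\<lambda>x a. real (graph_dist E1 x a))"
  define d2 where "d2 = (\<lambda>x a. real (graph_dist E2 x a))"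
  have n1p: "n1 > 0" and n2p: "n2 > 0" using n_def G1(3) G2(3) by auto
  have n1nz: "n1 \<noteq> 0" and n2nz: "n2 \<noteq> 0" using n1p n2p by auto
  have H1: "\<And>x. (\<Sum>a\<in>UNIV. d1 x a * K1 $ a) = n1"
    and I1: "\<And>g::real^'a. (\<And>x. (\<Sum>a\<in>UNIV. d1 x a * g$a) = 0) \<Longrightarrow> g = 0"
    using side_facts[OF C2(1)] unfolding d1_def K_def n_def by auto
  have H2: "\<And>x. (\<Sum>a\<in>UNIV. d2 x a * K2 $ a) = n2"
    and I2: "\<And>g::real^'b. (\<And>x. (\<Sum>a\<in>UNIV. d2 x a * g$a) = 0) \<Longrightarrow> g = 0"
    using side_facts[OF C2(2)] unfolding d2_def K_def n_def by auto
  have d1uu: "d1 u u = 0" and d2vv: "d2 v v = 0" by (simp_all add: d1_def d2_def dist_self)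
  have DLL: "D $ Inl x $ Inl a = d1 x a" for x a
    by (simp add: D_def dist_matrix_def d1_def bridge_dist_Inl[OF G1(2) G2(2)])
  have DLR: "D $ Inl x $ Inr b = d1 x u + 1 + d2 v b" for x b
    by (simp add: D_def dist_matrix_def d1_def d2_def bridge_dist_Inl[OF G1(2) G2(2)])
  have DRR: "D $ Inr y $ Inr b = d2 y b" for y b
    by (simp add: D_def dist_matrix_def d2_def bridge_dist_Inr[OF G1(2) G2(2)])
  have DRL: "D $ Inr y $ Inl a = d2 y v + 1 + d1 u a" for y a
    by (simp add: D_def dist_matrix_def d1_def d2_def bridge_dist_Inr[OF G1(2) G2(2)])
  have rowL: "(D *v w) $ Inl x = (\<Sum>a\<in>UNIV. d1 x a * w$Inl a) + (d1 x u + 1) * (\<Sum>b\<in>UNIV. w$Inr b) + (\<Sum>b\<in>UNIV. d2 v b * w$Inr b)" for w x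
    by (simp add: matrix_vector_mult_def sum_split_UNIV DLL DLR algebra_simps sum.distrib sum_distrib_left)
  have rowR: "(D *v w) $ Inr y = (\<Sum>b\<in>UNIV. d2 y b * w$Inr b) + (d2 y v + 1) * (\<Sum>a\<in>UNIV. w$Inl a) + (\<Sum>a\<in>UNIV. d1 u a * w$Inl a)" for w y
    by (simp add: matrix_vector_mult_def sum_split_UNIV DRR DRL algebra_simps sum.distrib sum_distrib_left)
  have Z4: "Z - 4 \<noteq> 0" using C1 by simp
  have kerD: "w = 0" if w0: "D *v w = 0" for w
  proof -
    define S1 where "S1 = (\<Sum>a\<in>UNIV. w$Inl a)"
    define S2 where "S2 = (\<Sum>b\<in>UNIV. w$Inr b)"
    define T1 where "T1 = (\<Sum>a\<in>UNIV. d1 u a * w$Inl a)"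
    define T2 where "T2 = (\<Sum>b\<in>UNIV. d2 v b * w$Inr b)"
    have eL: "(\<Sum>a\<in>UNIV. d1 x a * w$Inl a) + (d1 x u + 1) * S2 + T2 = 0" for x
      using rowL[of w x] w0 unfolding S2_def T2_def by simp
    have eR: "(\<Sum>b\<in>UNIV. d2 y b * w$Inr b) + (d2 y v + 1) * S1 + T1 = 0" for y
      using rowR[of w y] w0 unfolding S1_def T1_def by simp
    note L = side_kernel[of d1 K1 n1 u "\<lambda>a. w$Inl a" S2 T2, OF H1 I1 d1uu n1nz eL]
    note R = side_kernel[of d2 K2 n2 v "\<lambda>b. w$Inr b" S1 T1, OF H2 I2 d2vv n2nz eR]
    have L1: "S1 = - S2 - (S2 + T2) / n1 * k1" using L(2) unfolding S1_def k_def by simp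
    have L2: "T1 = - (S2 + T2)" using L(3) unfolding T1_def by simp
    have R1: "S2 = - S1 - (S1 + T1) / n2 * k2" using R(2) unfolding S2_def k_def by simp
    have R2: "T2 = - (S1 + T1)" using R(3) unfolding T2_def by simp
    define A where "A = S1 + T1"
    define B where "B = S2 + T2"
    define p where "p = 2 + k1 / n1"
    define q where "q = 2 + k2 / n2"
    have S1e: "S1 = A + B" using L2 unfolding A_def B_def by linarith
    have S2e: "S2 = A + B" using R2 unfolding A_def B_def by linarith
    have L1': "S1 = - S2 - B * (k1 / n1)" using L1 unfolding B_def by simp
    have R1': "S2 = - S1 - A * (k2 / n2)" using R1 unfolding A_def by simp
    have "2 * A + p * B = S1 + S2 + B * (k1 / n1)" unfolding p_def S1e S2e by (simp add: algebra_simps)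
    then have e1: "2 * A + p * B = 0" using L1' by linarith
    have "q * A + 2 * B = S1 + S2 + A * (k2 / n2)" unfolding q_def S1e S2e by (simp add: algebra_simps)
    then have e2: "q * A + 2 * B = 0" using R1' by linarith
    have pq: "p * q \<noteq> 4" using C1 Z_def p_def q_def by simp
    have "(p * q - 4) * A = 0"
    proof -
      have "(p * q - 4) * A = p * (q * A + 2 * B) - 2 * (2 * A + p * B)" by (simp add: algebra_simps)
      then show ?thesis using e1 e2 by simp
    qed
    then have A0: "A = 0" using pq by simp
    then have B0: "B = 0" using e2 by simp
    have S20: "S2 = 0" using L2 R2 A0 B0 unfolding A_def B_def by linarith
    have S10: "S1 = 0" using L2 R2 A0 B0 unfolding A_def B_def by linarith
    have wl: "w $ Inl a = 0" for a using L(1)[of a] n1p S20 B0 unfolding B_def by simp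
    have wr: "w $ Inr b = 0" for b using R(1)[of b] n2p S10 A0 unfolding A_def by simp
    show "w = 0" unfolding vec_eq_iff
    proof
      fix z show "w $ z = 0 $ z" by (cases z) (simp_all add: wl wr)
    qed
  qed
  have invD: "invertible D"
    unfolding invertible_left_inverse matrix_left_invertible_ker using kerD by blast
  define c1 where "c1 = - \<alpha> * k1 / 2"
  define c2 where "c2 = - \<beta> * k2 / 2"
  define Kc :: "real^('a+'b)" where
    "Kc = (\<chi> z. case z of Inl a \<Rightarrow> \<alpha> * K1$a + (if a = u then c1 else 0)
                        | Inr b \<Rightarrow> \<beta> * K2$b + (if b = v then c2 else 0))"
  have KcL: "Kc $ Inl a = \<alpha> * K1$a + (if a = u then c1 else 0)" for a by (simp add: Kc_def)
  have KcR: "Kc $ Inr b = \<beta> * K2$b + (if b = v then c2 else 0)" for b by (simp add: Kc_def)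
  note al = alg[OF n1p n2p Z_def C1 \<alpha>_def \<beta>_def]
  have al2: "\<beta> * n2 + \<alpha> * k1 / 2 + \<alpha> * n1 = n1 + n2" using al by simp
  have card: "real CARD('a + 'b) = n1 + n2" using n_def by simp
  have DK: "D *v Kc = real CARD('a + 'b) *\<^sub>R 1"
    unfolding vec_eq_iff
  proof
    fix z show "(D *v Kc) $ z = (real CARD('a + 'b) *\<^sub>R 1) $ z"
    proof (cases z)
      case (Inl x)
 have hc2: "\<beta> * k2 + c2 = \<beta> * k2 / 2" unfolding c2_def by simp
      have hc1: "c1 + \<beta> * k2 / 2 = 0" unfolding c1_def using al(1) by simp
      have "(D *v Kc) $ z = (\<alpha> * n1 + c1 * d1 x u) + (d1 x u + 1) * (\<beta> * k2 + c2) + (\<beta> * n2 + c2 * d2 v v)"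
        unfolding Inl rowL KcL KcR side_exist[of d1 K1 n1 u, OF H1 d1uu] side_exist[of d2 K2 n2 v, OF H2 d2vv] k_def ..
           also have "\<dots> = \<alpha> * n1 + d1 x u * (c1 + \<beta> * k2 / 2) + \<beta> * k2 / 2 + \<beta> * n2"
        unfolding hc2 d2vv by (simp add: algebra_simps)
      also have "\<dots> = n1 + n2" unfolding hc1 using al(2) by simp
      finally show ?thesis using card by simp
    next
      case (Inr y)
 have hc1: "\<alpha> * k1 + c1 = \<alpha> * k1 / 2" unfolding c1_def by simp
      have hc2: "c2 + \<alpha> * k1 / 2 = 0" unfolding c2_def using al(1) by simp
      have "(D *v Kc) $ z = (\<beta> * n2 + c2 * d2 y v) + (d2 y v + 1) * (\<alpha> * k1 + c1) + (\<alpha> * n1 + c1 * d1 u u)"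
        unfolding Inr rowR KcL KcR side_exist[of d1 K1 n1 u, OF H1 d1uu] side_exist[of d2 K2 n2 v, OF H2 d2vv] k_def ..
           also have "\<dots> = \<beta> * n2 + d2 y v * (c2 + \<alpha> * k1 / 2) + \<alpha> * k1 / 2 + \<alpha> * n1"
        unfolding hc1 d1uu by (simp add: algebra_simps)
      also have "\<dots> = n1 + n2" unfolding hc2 using al2 by simp
      finally show ?thesis using card by simp
    qed
  qed
  have K: "curv_inv D = Kc" by (rule curv_eq[OF invD DK])
  show ?thesis
    unfolding Let_def D_def[symmetric] \<alpha>_def[symmetric] \<beta>_def[symmetric] K
  proof (intro conjI allI impI)
    show "invertible D" by (rule invD)
    show "Kc $ Inl x = \<alpha> * K1 $ x" if "x \<noteq> u" for x using that by (simp add: KcL)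
    show "Kc $ Inr y = \<beta> * K2 $ y" if "y \<noteq> v" for y using that by (simp add: KcR)
    show "Kc $ Inl u = (1 - k1 / (2 * ku)) * \<alpha> * ku"
      using C3(1) by (simp add: KcL c1_def kuv_def[symmetric] field_simps)
    show "Kc $ Inr v = (1 - k2 / (2 * kv)) * \<beta> * kv"
      using C3(2) by (simp add: KcR c2_def kuv_def[symmetric] field_simps)
  qed
qed

end
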